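(* Let $\mathbb G$ be an $H$-type group with $\dim\mathfrak v=2n$, $\dim\mathfrak z=m$, let $p_t$ be its hypoelliptic heat kernel and, for $C>0$, \[ W_{1,C}:= -\frac{C}{4} \frac{|\nabla p_{1}|^2}{p_{1}^2}+\frac{C}{2} \frac{\Delta p_{1}}{p_{1}}+ \log p_{1}. \] Then at every point $(x,z)\in\mathbb G$ with $z\neq 0$, \[ W_{1,C}=-\frac{RC}{4} \frac{p_{1,1,0}^2+p_{1,0,1}^2}{p_{1,0,0}^2}+\frac{RC}{2}\,\frac{p_{1,2,0}+p_{1,0,2}+\frac{n}{R} p_{1,1,0}+\frac{m-1}{|z|}p_{1,0,1}}{p_{1,0,0}} + \log p_{1,0,0}, \] where $R=|x|^2/4$ and all $p_{1,k_1,k_2}$ are evaluated at $(x,z)$.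
   Context: An $H$-type group is a connected, simply connected step-2 stratified Lie group whose Lie algebra $\mathfrak g$ carries an inner product $\langle\cdot,\cdot\rangle$ such that, writing $\mathfrak z$ for the centre and $\mathfrak v=\mathfrak z^\perp$, one has $[\mathfrak v,\mathfrak v]=\mathfrak z$, and for every $Z\in\mathfrak z$ the map $J_Z:\mathfrak v\to\mathfrak v$ defined by $\langle J_ZX,Y\rangle=\langle Z,[X,Y]\rangle$ is an isometry whenever $\langle Z,Z\rangle=1$. Points are written $(x,z)\in\mathbb R^{2n}\times\mathbb R^m$ in exponential coordinates with respect to an orthonormal basis. $X_1,\dots,X_{2n}$ are left-invariant vector fields forming an orthonormal basis of $\mathfrak v$; $|\nabla f|^2=\sum_j(X_jf)^2$, $\Delta=\sum_jX_j^2$. The heat kernel of $\Delta$ at the identity is \[ p_t(x,z)=\frac{1}{(4\pi)^n (2 \pi)^m t^{n+m}} \int_{\mathbb R^m} e^{\frac i t \langle \lambda, z\rangle -\frac{|x|^2}{4 t}|\lambda| \coth|\lambda|} \Big( \frac{|\lambda|}{\sinh |\lambda|}\Big)^n\,\mathrm d \lambda , \] so that $p_t(x,z)=t^{-n-m}h(R/t,|z|/t)$ with $R=|x|^2/4$ and $h$ the analytic function $h(r,s)=\frac{1}{(4\pi)^n(2\pi)^m}\int_{\mathbb R^m}e^{is\lambda_1-r|\lambda|\coth|\lambda|}(|\lambda|/\sinh|\lambda|)^n\,\mathrm d\lambda$. Define $p_{t,k_1,k_2}(x,z)=t^{-n-m-k_1-k_2}(\partial_1^{k_1}\partial_2^{k_2}h)(R/t,|z|/t)$;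 in particular $p_{1,0,0}=p_1$. *)

theory Defs
  imports "HOL-Analysis.Analysis"
begin

text \<open>H-type groups in exponential coordinates.  The Lie algebra is
  real^'v (the space v, with orthonormal coordinates) times real^'m (the centre z).
  The bracket is [(x,z),(x',z')] = (0, B x x').\<close>

text \<open>J_Z x is the vector with  J_Z x . y = Z . B x y  for all y.\<close>
definition Jmap :: "(real^'v \<Rightarrow> real^'v \<Rightarrow> real^'m) \<Rightarrow> real^'m \<Rightarrow> real^'v \<Rightarrow> real^'v" where
  "Jmap B Z x = (\<chi> j. Z \<bullet> B x (axis j 1))"

definition Htype :: "(real^'v \<Rightarrow> real^'v \<Rightarrow> real^'m) \<Rightarrow> bool" where
  "Htype B \<longleftrightarrow> bilinear B \<and> (\<forall>x y. B x y = - B y x)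
     \<and> span (range (\<lambda>(x, y). B x y)) = UNIV
     \<and> (\<forall>x. (\<forall>y. B x y = 0) \<longrightarrow> x = 0)
     \<and> (\<forall>Z x. norm Z = 1 \<longrightarrow> norm (Jmap B Z x) = norm x)"

text \<open>Group law in exponential coordinates (Baker-Campbell-Hausdorff, step 2).\<close>
definition hmul :: "(real^'v \<Rightarrow> real^'v \<Rightarrow> real^'m) \<Rightarrow> ((real^'v) \<times> (real^'m)) \<Rightarrow> ((real^'v) \<times> (real^'m)) \<Rightarrow> ((real^'v) \<times> (real^'m))" where
  "hmul B g g' = (fst g + fst g', snd g + snd g' + (1/2) *\<^sub>R B (fst g) (fst g'))"

definition Xfield :: "(real^'v \<Rightarrow> real^'v \<Rightarrow> real^'m) \<Rightarrow> 'v \<Rightarrow> ((real^'v) \<times> (real^'m) \<Rightarrow> real) \<Rightarrow> (real^'v) \<times> (real^'m) \<Rightarrow> real" where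
  "Xfield B j f g = deriv (\<lambda>\<tau>. f (hmul B g (\<tau> *\<^sub>R axis j 1, 0))) 0"

definition gradsq :: "(real^'v \<Rightarrow> real^'v \<Rightarrow> real^'m) \<Rightarrow> ((real^'v) \<times> (real^'m) \<Rightarrow> real) \<Rightarrow> (real^'v) \<times> (real^'m) \<Rightarrow> real" where
  "gradsq B f g = (\<Sum>j\<in>UNIV. (Xfield B j f g)^2)"

definition subLap :: "(real^'v \<Rightarrow> real^'v \<Rightarrow> real^'m) \<Rightarrow> ((real^'v) \<times> (real^'m) \<Rightarrow> real) \<Rightarrow> (real^'v) \<times> (real^'m) \<Rightarrow> real" where
  "subLap B f g = (\<Sum>j\<in>UNIV. Xfield B j (Xfield B j f) g)"

definition phiH :: "real \<Rightarrow> real" where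
  "phiH a = (if a = 0 then 1 else a / sinh a)"

definition psiH :: "real \<Rightarrow> real" where
  "psiH a = (if a = 0 then 1 else a * cosh a / sinh a)"

text \<open>The heat kernel p_t(x,z) (the integral is real-valued; we take its real part).\<close>
definition heat_kernel :: "nat \<Rightarrow> real \<Rightarrow> real^'v \<Rightarrow> real^('m::finite) \<Rightarrow> real" where
  "heat_kernel n t x z =
     1 / ((4*pi)^n * (2*pi)^CARD('m) * t^(n + CARD('m))) *
     Re (integral\<^sup>L lborel (\<lambda>l::real^'m.
         exp (\<i> * complex_of_real ((l \<bullet> z) / t) - complex_of_real (norm x ^ 2 / (4*t) * psiH (norm l)))
         * complex_of_real (phiH (norm l) ^ n)))"

text \<open>The function h(r,s); the index i1 plays the role of the first coordinate lambda_1.\<close>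
definition hfun :: "nat \<Rightarrow> ('m::finite) \<Rightarrow> real \<Rightarrow> real \<Rightarrow> real" where
  "hfun n i1 r s =
     1 / ((4*pi)^n * (2*pi)^CARD('m)) *
     Re (integral\<^sup>L lborel (\<lambda>l::real^'m.
         exp (\<i> * complex_of_real (s * l $ i1) - complex_of_real (r * psiH (norm l)))
         * complex_of_real (phiH (norm l) ^ n)))"

definition hder :: "nat \<Rightarrow> ('m::finite) \<Rightarrow> nat \<Rightarrow> nat \<Rightarrow> real \<Rightarrow> real \<Rightarrow> real" where
  "hder n i1 k1 k2 r s = (deriv ^^ k1) (\<lambda>r'. (deriv ^^ k2) (\<lambda>s'. hfun n i1 r' s') s) r"

definition pk :: "nat \<Rightarrow> ('m::finite) \<Rightarrow> real \<Rightarrow> nat \<Rightarrow> nat \<Rightarrow> real^'v \<Rightarrow> real^'m \<Rightarrow> real" where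
  "pk n i1 t k1 k2 x z = 1 / t ^ (n + CARD('m) + k1 + k2) *
      hder n i1 k1 k2 ((norm x ^ 2 / 4) / t) (norm z / t)"

end

theory Submission
  imports Defs "HOL-Probability.Distributions"
begin

proposition
 fixes f :: "real^'n \<Rightarrow> real^'n"
  assumes "linear f" "S \<in> lmeasurable"
  shows measurable_linear_image_gen: "(f ` S) \<in> lmeasurable"
    and measure_linear_image_gen: "measure lebesgue (f ` S) = \<bar>det (matrix f)\<bar> * measure lebesgue S" (is "?Q f S")
proof -
  have "\<forall>S \<in> lmeasurable. (f ` S) \<in> lmeasurable \<and> ?Q f S"
  proof (rule induct_linear_elementary [OF \<open>linear f\<close>]; intro ballI)
    fix f g and S :: "(real,'n) vec set"
    assume "linear f" and "linear g"
      and f [rule_format]: "\<forall>S \<in> lmeasurable. f ` S \<in> lmeasurable \<and> ?Q f S"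
      and g [rule_format]: "\<forall>S \<in> lmeasurable. g ` S \<in> lmeasurable \<and> ?Q g S"
      and S: "S \<in> lmeasurable"
    then have gS: "g ` S \<in> lmeasurable"
      by blast
    show "(f \<circ> g) ` S \<in> lmeasurable \<and> ?Q (f \<circ> g) S"
      using f [OF gS] g [OF S] matrix_compose [OF \<open>linear g\<close> \<open>linear f\<close>]
      by (simp add: o_def image_comp abs_mult det_mul)
  next
    fix f :: "real^'n::_ \<Rightarrow> real^'n::_" and i and S :: "(real^'n::_) set"
    assume "linear f" and 0: "\<And>x. f x $ i = 0" and "S \<in> lmeasurable"
    then have "\<not> inj f"
      by (metis (full_types) linear_injective_imp_surjective one_neq_zero surjE vec_component)
    have detf: "det (matrix f) = 0"
      using \<open>\<not> inj f\<close> det_nz_iff_inj[OF \<open>linear f\<close>] by blast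
    show "f ` S \<in> lmeasurable \<and> ?Q f S"
    proof
      show "f ` S \<in> lmeasurable"
        using lmeasurable_iff_indicator_has_integral \<open>linear f\<close> \<open>\<not> inj f\<close> negligible_UNIV negligible_linear_singular_image by blast
      have "measure lebesgue (f ` S) = 0"
        by (meson \<open>\<not> inj f\<close> \<open>linear f\<close> negligible_imp_measure0 negligible_linear_singular_image)
      also have "\<dots> = \<bar>det (matrix f)\<bar> * measure lebesgue S"
        by (simp add: detf)
      finally show "?Q f S" .
    qed
  next
    fix c and S :: "(real^'n::_) set"
    assume "S \<in> lmeasurable"
    show "(\<lambda>a. \<chi> i. c i * a $ i) ` S \<in> lmeasurable \<and> ?Q (\<lambda>a. \<chi> i. c i * a $ i) S"
    proof
      show "(\<lambda>a. \<chi> i. c i * a $ i) ` S \<in> lmeasurable"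
        by (simp add: \<open>S \<in> lmeasurable\<close> measurable_stretch)
      show "?Q (\<lambda>a. \<chi> i. c i * a $ i) S"
        by (simp add: measure_stretch [OF \<open>S \<in> lmeasurable\<close>, of c] axis_def matrix_def det_diagonal)
    qed
  next
    fix m :: "'n" and n :: "'n" and S :: "(real, 'n) vec set"
    assume "m \<noteq> n" and "S \<in> lmeasurable"
    let ?h = "\<lambda>v::(real, 'n) vec. \<chi> i. v $ Transposition.transpose m n i"
    have lin: "linear ?h"
      by (rule linearI) (simp_all add: plus_vec_def scaleR_vec_def)
    have meq: "measure lebesgue ((\<lambda>v::(real, 'n) vec. \<chi> i. v $ Transposition.transpose m n i) ` cbox a b)
             = measure lebesgue (cbox a b)" for a b
    proof (cases "cbox a b = {}")
      case True then show ?thesis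
        by simp
    next
      case False
      then have him: "?h ` (cbox a b) \<noteq> {}"
        by blast
      have eq: "?h ` (cbox a b) = cbox (?h a) (?h b)"
        by (auto simp: image_iff lambda_swap_Galois mem_box_cart) (metis transpose_involutory)+
      show ?thesis
        using him prod.permute [OF permutes_swap_id, where S=UNIV and g="\<lambda>i. (b - a)$i", symmetric]
        by (simp add: eq content_cbox_cart False)
    qed
    have "(\<chi> i j. if Transposition.transpose m n i = j then 1 else 0) = (\<chi> i j. if j = Transposition.transpose m n i then 1 else (0::real))"
      by (auto intro!: Cart_lambda_cong)
    then have "matrix ?h = transpose(\<chi> i j. mat 1 $ i $ Transposition.transpose m n j)"
      by (auto simp: matrix_eq transpose_def axis_def mat_def matrix_def)
    then have 1: "\<bar>det (matrix ?h)\<bar> = 1"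
      by (simp add: det_permute_columns permutes_swap_id sign_swap_id abs_mult)
    show "?h ` S \<in> lmeasurable \<and> ?Q ?h S"
      using measure_linear_sufficient [OF lin \<open>S \<in> lmeasurable\<close>] meq 1 by force
  next
    fix m n :: "'n" and S :: "(real, 'n) vec set"
    assume "m \<noteq> n" and "S \<in> lmeasurable"
    let ?h = "\<lambda>v::(real, 'n) vec. \<chi> i. if i = m then v $ m + v $ n else v $ i"
    have lin: "linear ?h"
      by (rule linearI) (auto simp: algebra_simps plus_vec_def scaleR_vec_def vec_eq_iff)
    have 1: "det(matrix ?h) = 1"
    proof -
      have "matrix ?h = (\<chi> k. if k = m then row m (mat 1) + 1 *s row n (mat 1) else row k (mat 1))"
        using \<open>m \<noteq> n\<close> by (auto simp: vec_eq_iff matrix_def axis_def row_def mat_def)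
      then show ?thesis
        using det_row_operation[OF \<open>m \<noteq> n\<close>, where c=1 and A="mat 1 :: real^'n^'n"] by simp
    qed
    have meq: "measure lebesgue (?h ` (cbox a b)) = measure lebesgue (cbox a b)" for a b
    proof (cases "cbox a b = {}")
      case True then show ?thesis by simp
    next
      case False
      then have ne: "(+) (\<chi> i. if i = n then - a $ n else 0) ` cbox a b \<noteq> {}"
        by auto
      let ?v = "\<chi> i. if i = n then - a $ n else 0"
      have "?h ` cbox a b
            = (+) (\<chi> i. if i = m \<or> i = n then a $ n else 0) ` ?h ` (+) ?v ` (cbox a b)"
        using \<open>m \<noteq> n\<close> unfolding image_comp o_def by (force simp: vec_eq_iff)
      then have "measure lebesgue (?h ` (cbox a b))
               = measure lebesgue ((\<lambda>v. \<chi> i. if i = m then v $ m + v $ n else v $ i) `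
                                   (+) ?v ` cbox a b)"
        by (rule ssubst) (rule measure_translation)
      also have "\<dots> = measure lebesgue ((\<lambda>v. \<chi> i. if i = m then v $ m + v $ n else v $ i) ` cbox (?v +a) (?v + b))"
        by (metis (no_types, lifting) cbox_translation)
      also have "\<dots> = measure lebesgue ((+) ?v ` cbox a b)"
        apply (subst measure_shear_interval)
        using \<open>m \<noteq> n\<close> ne apply auto
        apply (simp add: cbox_translation)
        by (metis cbox_borel cbox_translation measure_completion sets_lborel)
      also have "\<dots> = measure lebesgue (cbox a b)"
        by (rule measure_translation)
        finally show ?thesis .
      qed
    show "?h ` S \<in> lmeasurable \<and> ?Q ?h S"
      using measure_linear_sufficient [OF lin \<open>S \<in> lmeasurable\<close>] meq 1 by force
  qed
  with assms show "(f ` S) \<in> lmeasurable" "?Q f S"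
    by metis+
qed

lemma lborel_orth_inv:
  fixes f :: "real^'n \<Rightarrow> real^'n"
  assumes f: "orthogonal_transformation f"
  shows "distr lborel borel f = lborel"
proof (rule lborel_eqI[symmetric])
  have lin: "linear f" using f by (simp add: orthogonal_transformation_linear)
  have fm: "f \<in> borel_measurable borel"
    using lin by (intro borel_measurable_continuous_onI linear_continuous_on linear_conv_bounded_linear[THEN iffD1])
  let ?g = "inv f"
  have g: "orthogonal_transformation ?g" using f by (rule orthogonal_transformation_inv)
  have glin: "linear ?g" using g by (simp add: orthogonal_transformation_linear)
  have bij: "bij f" using f by (rule orthogonal_transformation_bij)
  fix l u :: "real^'n"
  assume le: "\<And>b. b \<in> Basis \<Longrightarrow> l \<bullet> b \<le> u \<bullet> b"
  have "emeasure (distr lborel borel f) (box l u) = emeasure lborel (f -` box l u)"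
    using fm by (subst emeasure_distr) auto
  also have "f -` box l u = ?g ` box l u" by (rule bij_vimage_eq_inv_image[OF bij])
  also have "emeasure lborel (?g ` box l u) = ennreal (measure lborel (?g ` box l u))"
  proof (rule emeasure_eq_ennreal_measure)
    have bd: "bounded (?g ` box l u)"
      using glin by (intro bounded_linear_image bounded_box) (simp add: linear_conv_bounded_linear)
    show "emeasure lborel (?g ` box l u) \<noteq> top"
      using emeasure_bounded_finite[OF bd] by simp
  qed
  also have "measure lborel (?g ` box l u) = measure lebesgue (?g ` box l u)"
  proof -
    have "open (f -` box l u)"
      using lin by (intro open_vimage open_box linear_continuous_on) (simp add: linear_conv_bounded_linear)
    then have "open (?g ` box l u)" by (simp add: bij_vimage_eq_inv_image[OF bij])
    then show ?thesis by (simp add: borel_open)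
  qed
  also have "\<dots> = \<bar>det (matrix ?g)\<bar> * measure lebesgue (box l u)"
    by (rule measure_linear_image_gen[OF glin]) simp
  also have "\<dots> = measure lborel (box l u)"
    using g by (simp add: borel_open)
  also have "ennreal \<dots> = emeasure lborel (box l u)"
    using le by (simp add: emeasure_eq_ennreal_measure emeasure_lborel_box_eq)
  finally show "emeasure (distr lborel borel f) (box l u) = (\<Prod>b\<in>Basis. (u - l) \<bullet> b)"
    using le by (simp add: emeasure_lborel_box_eq)
qed simp

lemma integral_orth_inv:
  fixes f :: "real^'n \<Rightarrow> real^'n" and g :: "real^'n \<Rightarrow> 'b::{banach, second_countable_topology}"
  assumes f: "orthogonal_transformation f" and gm: "g \<in> borel_measurable borel"
  shows "(\<integral>l. g (f l) \<partial>lborel) = (\<integral>l. g l \<partial>lborel)"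
proof -
  have lin: "linear f" using f by (simp add: orthogonal_transformation_linear)
  have fm: "f \<in> borel_measurable borel"
    using lin by (intro borel_measurable_continuous_onI linear_continuous_on linear_conv_bounded_linear[THEN iffD1])
  have "(\<integral>l. g l \<partial>lborel) = (\<integral>l. g l \<partial>distr lborel borel f)" by (simp add: lborel_orth_inv[OF f])
  also have "\<dots> = (\<integral>l. g (f l) \<partial>lborel)"
    using fm gm by (subst integral_distr) auto
  finally show ?thesis by simp
qed

lemma DI_abs:
  fixes f f' :: "real \<Rightarrow> 'a \<Rightarrow> 'b::{banach,second_countable_topology}" and w :: "'a \<Rightarrow> real"
  assumes d: "d > 0"
   and der: "\<And>u l. u \<in> ball u0 d \<Longrightarrow> ((\<lambda>u. f u l) has_vector_derivative f' u l) (at u)"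
   and fm: "\<And>u. u \<in> ball u0 d \<Longrightarrow> f u \<in> borel_measurable M"
   and f'm: "f' u0 \<in> borel_measurable M"
   and wi: "integrable M w"
   and bnd: "\<And>u l. u \<in> ball u0 d \<Longrightarrow> norm (f' u l) \<le> w l"
   and fi: "integrable M (f u0)"
  shows "((\<lambda>u. \<integral>l. f u l \<partial>M) has_vector_derivative (\<integral>l. f' u0 l \<partial>M)) (at u0)"
proof -
  have u0: "u0 \<in> ball u0 d" using d by simp
  have w0: "0 \<le> w l" for l using bnd[OF u0, of l] norm_ge_zero order_trans by blast
  have f'i: "integrable M (f' u0)"
    by (rule Bochner_Integration.integrable_bound[OF wi f'm])
       (use bnd[OF u0] w0 in \<open>auto intro!: AE_I2 intro: order_trans\<close>)
  define r where "r y l = f y l - f u0 l - (y - u0) *\<^sub>R f' u0 l" for y l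
  have rb: "norm (r y l) \<le> norm (y - u0) * (2 * w l)" if y: "y \<in> ball u0 d" for y l
  proof -
    have "norm (f y l - f u0 l - (y - u0) *\<^sub>R f' u0 l) \<le> norm (y - u0) * (2 * w l)"
    proof (rule vector_differentiable_bound_linearization[where S="ball u0 d"])
      show "((\<lambda>u. f u l) has_vector_derivative f' x l) (at x within ball u0 d)" if "x \<in> ball u0 d" for x
        using der[OF that] by (rule has_vector_derivative_at_within)
      show "closed_segment u0 y \<subseteq> ball u0 d" using y u0 by (intro closed_segment_subset) auto
      show "norm (f' x l - f' u0 l) \<le> 2 * w l" if "x \<in> ball u0 d" for x
        using norm_triangle_ineq4[of "f' x l" "f' u0 l"] bnd[OF that, of l] bnd[OF u0, of l] by linarith
    qed (fact u0)
    then show ?thesis by (simp add: r_def)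
  qed
  have rm: "r y \<in> borel_measurable M" if "y \<in> ball u0 d" for y
    unfolding r_def using fm[OF that] fm[OF u0] f'm by measurable
  have ri: "integrable M (r y)" if "y \<in> ball u0 d" for y
    by (rule Bochner_Integration.integrable_bound[where f="\<lambda>l. norm (y - u0) * (2 * w l)"])
       (use wi rm[OF that] rb[OF that] w0 in \<open>auto intro!: AE_I2 intro: order_trans\<close>)
  have fyi: "integrable M (f y)" if "y \<in> ball u0 d" for y
  proof -
    have "f y = (\<lambda>l. r y l + f u0 l + (y - u0) *\<^sub>R f' u0 l)" by (auto simp: r_def)
    then show ?thesis using ri[OF that] fi f'i by simp
  qed
  define q where "q y l = (if y \<in> ball u0 d then norm (r y l) / norm (y - u0) else 0)" for y l
  have qlim: "((\<lambda>y. \<integral>l. q y l \<partial>M) \<longlongrightarrow> 0) (at u0)"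
  proof (subst tendsto_at_iff_sequentially, intro allI impI)
    fix X :: "nat \<Rightarrow> real" assume X: "\<forall>i. X i \<in> UNIV - {u0}" and Xl: "X \<longlonglongrightarrow> u0"
    have "(\<lambda>i. \<integral>l. q (X i) l \<partial>M) \<longlonglongrightarrow> (\<integral>l. 0 \<partial>M)"
    proof (rule integral_dominated_convergence[where w="\<lambda>l. 2 * w l"])
      show "(\<lambda>l. 0::real) \<in> borel_measurable M" by simp
      show "q (X i) \<in> borel_measurable M" for i
        unfolding q_def using rm by (cases "X i \<in> ball u0 d") auto
      show "integrable M (\<lambda>l. 2 * w l)" using wi by simp
      show "AE l in M. norm (q (X i) l) \<le> 2 * w l" for i
      proof -
        have "norm (q (X i) l) \<le> 2 * w l" for l
        proof (cases "X i \<in> ball u0 d")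
          case True
          have "X i \<noteq> u0" using X by auto
          then have "norm (r (X i) l) / norm (X i - u0) \<le> 2 * w l"
            using rb[OF True, of l] by (simp add: divide_le_eq mult.commute)
          then show ?thesis using True by (simp add: q_def)
        qed (use w0 in \<open>simp add: q_def\<close>)
        then show ?thesis by simp
      qed
      show "AE l in M. (\<lambda>i. q (X i) l) \<longlonglongrightarrow> 0"
      proof (rule AE_I2)
        fix l
        have "((\<lambda>y. norm (f y l - f u0 l - (y - u0) *\<^sub>R f' u0 l) / norm (y - u0)) \<longlongrightarrow> 0) (at u0)"
          using der[OF u0, of l] unfolding has_vector_derivative_def has_derivative_iff_norm by simp
        then have "((\<lambda>y. norm (r y l) / norm (y - u0)) \<longlongrightarrow> 0) (at u0)" by (simp add: r_def)
        moreover have "\<forall>\<^sub>F y in at u0. norm (r y l) / norm (y - u0) = q y l"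
          using eventually_at_ball[OF d, of u0 UNIV] by eventually_elim (auto simp: q_def)
        ultimately have lim: "((\<lambda>y. q y l) \<longlongrightarrow> 0) (at u0)"
          by (rule Lim_transform_eventually)
        have Xat: "filterlim X (at u0) sequentially"
          using X Xl by (auto simp: filterlim_at intro!: always_eventually)
        show "(\<lambda>i. q (X i) l) \<longlonglongrightarrow> 0"
          by (rule filterlim_compose[OF lim Xat])
      qed
    qed
    then show "((\<lambda>y. \<integral>l. q y l \<partial>M) \<circ> X) \<longlonglongrightarrow> 0" by (simp add: o_def)
  qed
  let ?F = "\<lambda>u. \<integral>l. f u l \<partial>M"
  let ?F' = "\<integral>l. f' u0 l \<partial>M"
  have le: "norm (?F y - ?F u0 - (y - u0) *\<^sub>R ?F') / norm (y - u0) \<le> (\<integral>l. q y l \<partial>M)"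
    if y: "y \<in> ball u0 d" for y
  proof -
    have "?F y - ?F u0 - (y - u0) *\<^sub>R ?F' = (\<integral>l. r y l \<partial>M)"
      unfolding r_def using fyi[OF y] fi f'i
      by (simp add: integral_diff integral_scaleR_right)
    then have "norm (?F y - ?F u0 - (y - u0) *\<^sub>R ?F') \<le> (\<integral>l. norm (r y l) \<partial>M)"
      by (simp add: integral_norm_bound)
    then have "norm (?F y - ?F u0 - (y - u0) *\<^sub>R ?F') / norm (y - u0) \<le> (\<integral>l. norm (r y l) \<partial>M) / norm (y - u0)"
      by (simp add: divide_right_mono)
    also have "\<dots> = (\<integral>l. q y l \<partial>M)"
      using y by (simp add: q_def)
    finally show ?thesis .
  qed
  show ?thesis
    unfolding has_vector_derivative_def has_derivative_iff_norm
  proof (intro conjI bounded_linear_scaleR_left)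
    show "((\<lambda>y. norm (?F y - ?F u0 - (y - u0) *\<^sub>R ?F') / norm (y - u0)) \<longlongrightarrow> 0) (at u0)"
    proof (rule tendsto_sandwich[OF _ _ tendsto_const qlim])
      show "\<forall>\<^sub>F y in at u0. 0 \<le> norm (?F y - ?F u0 - (y - u0) *\<^sub>R ?F') / norm (y - u0)" by simp
      show "\<forall>\<^sub>F y in at u0. norm (?F y - ?F u0 - (y - u0) *\<^sub>R ?F') / norm (y - u0) \<le> (\<integral>l. q y l \<partial>M)"
        using eventually_at_ball[OF d, of u0 UNIV] by eventually_elim (use le in auto)
    qed
  qed
qed

lemma sinh_ge_self: "0 \<le> (a::real) \<Longrightarrow> a \<le> sinh a"
  using real_le_x_sinh[of a] by (simp add: sinh_field_def exp_minus)

lemma psiH_bounds: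
  assumes "0 \<le> a" shows "0 \<le> psiH a" "psiH a \<le> 1 + a"
proof -
  show "0 \<le> psiH a" using assms by (auto simp: psiH_def)
  show "psiH a \<le> 1 + a"
  proof (cases "a = 0")
    case False
    then have a: "a > 0" using assms by simp
    then have s: "sinh a > 0" by simp
    have "cosh a - sinh a = exp (-a)" by (rule cosh_minus_sinh)
    moreover have "exp (-a) \<le> 1" using a by simp
    ultimately have "a * (cosh a - sinh a) \<le> a" using a by (simp add: mult_left_le)
    also have "\<dots> \<le> sinh a" using sinh_ge_self a by simp
    finally have "a * cosh a \<le> (1 + a) * sinh a" by (simp add: algebra_simps)
    then show ?thesis using s False by (simp add: psiH_def divide_le_eq)
  qed (simp add: psiH_def)
qed

lemma phiH_bounds:
  assumes "0 \<le> a" shows "0 \<le> phiH a" "phiH a \<le> 1" "phiH a \<le> 4 * (1 + a) * exp (-a)"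
proof -
  show "0 \<le> phiH a" using assms by (auto simp: phiH_def)
  show "phiH a \<le> 1" using assms sinh_ge_self[of a] by (auto simp: phiH_def divide_le_eq)
  show "phiH a \<le> 4 * (1 + a) * exp (-a)"
  proof (cases "a = 0")
    case True
    then show ?thesis by (simp add: phiH_def)
  next
    case False
    then have a: "a > 0" using assms by simp
    then have s: "sinh a > 0" by simp
    show ?thesis
    proof (cases "a \<le> 1")
      case True
      have "exp a \<le> exp 1" using True by simp
      also have "\<dots> \<le> 3" by (rule exp_le)
      finally have "1 \<le> 4 * (1 + a) * exp (-a)" using a by (simp add: exp_minus field_simps)
      moreover have "phiH a \<le> 1" using assms sinh_ge_self[of a] by (auto simp: phiH_def divide_le_eq)
      ultimately show ?thesis by linarith
    next
      case False
      have "exp 2 \<ge> (3::real)" using exp_ge_add_one_self[of 2] by simp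
      then have "exp (-2) \<le> (1/2::real)" by (simp add: exp_minus field_simps)
      moreover have "exp (-2*a) \<le> exp (-2)" using False by simp
      ultimately have e: "exp (-2*a) \<le> 1/2" by linarith
      have "0 \<le> (1 + a) * (1 - 2 * exp (-2*a))" using e a by (intro mult_nonneg_nonneg) auto
      then have "a \<le> 2 * (1 + a) * (1 - exp (-2*a))" by (simp add: algebra_simps)
      also have "2 * (1 + a) * (1 - exp (-2*a)) = 4 * (1 + a) * exp (-a) * sinh a"
      proof -
        have "exp (-2*a) = exp (-a) * exp (-a)" by (simp flip: exp_add)
        then show ?thesis by (simp add: sinh_field_def exp_minus field_simps)
      qed
      finally show ?thesis using s by (simp add: phiH_def divide_le_eq)
    qed
  qed
qed

lemma poly_le_exp:
  assumes "0 \<le> a" shows "(1 + a) ^ k \<le> (4 * real k + 4) ^ k * exp (a / 4)"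
proof -
  define N where "N = Suc k"
  have N: "N > 0" "real N = real k + 1" by (auto simp: N_def)
  have "1 + a \<le> (4 * real N) * (1 + (a/4) / real N)" using N assms by (simp add: field_simps)
  then have "(1 + a) ^ k \<le> ((4 * real N) * (1 + (a/4) / real N)) ^ k"
    using assms by (intro power_mono) auto
  also have "\<dots> = (4 * real N) ^ k * (1 + (a/4) / real N) ^ k" by (simp add: power_mult_distrib)
  also have "(1 + (a/4) / real N) ^ k \<le> (1 + (a/4) / real N) ^ N"
    using assms N by (intro power_increasing) (auto simp: N_def)
  also have "\<dots> \<le> exp (a/4)"
    using assms N by (intro exp_ge_one_plus_x_over_n_power_n) auto
  finally show ?thesis using N by (simp add: mult_left_mono algebra_simps)
qed


lemma nn_exp_abs_1d:
  assumes c: "(c::real) > 0"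
  shows "(\<integral>\<^sup>+t. ennreal (exp (-c * \<bar>t\<bar>)) \<partial>lborel) < \<infinity>"
proof -
  let ?e = "erlang_density 0 c"
  have e1: "(\<integral>\<^sup>+t. ennreal (?e t) \<partial>lborel) = 1"
    using nn_integral_erlang_ith_moment[OF c, of 0 0] by simp
  have e2: "(\<integral>\<^sup>+t. ennreal (?e (-t)) \<partial>lborel) = 1"
  proof -
    have "(\<integral>\<^sup>+t. ennreal (?e (-t)) \<partial>lborel) = (\<integral>\<^sup>+t. ennreal (?e t) \<partial>distr lborel borel uminus)"
      by (subst nn_integral_distr) auto
    then show ?thesis using e1 by (simp add: lborel_distr_uminus)
  qed
  have le: "ennreal (exp (-c * \<bar>t\<bar>)) \<le> ennreal (1/c) * (ennreal (?e t) + ennreal (?e (-t)))" for t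
  proof -
    have "exp (-c * \<bar>t\<bar>) \<le> (1/c) * (?e t + ?e (-t))"
      using c by (cases "t < 0"; cases "t > 0") (auto simp: erlang_density_def field_simps)
    moreover have "0 \<le> ?e t" "0 \<le> ?e (-t)" using c by auto
    ultimately show ?thesis using c
      by (simp add: ennreal_mult[symmetric] ennreal_plus[symmetric] del: ennreal_plus)
  qed
  have "(\<integral>\<^sup>+t. ennreal (exp (-c * \<bar>t\<bar>)) \<partial>lborel) \<le>
        (\<integral>\<^sup>+t. ennreal (1/c) * (ennreal (?e t) + ennreal (?e (-t))) \<partial>lborel)"
    by (intro nn_integral_mono le)
  also have "\<dots> = ennreal (1/c) * ((\<integral>\<^sup>+t. ennreal (?e t) \<partial>lborel) + (\<integral>\<^sup>+t. ennreal (?e (-t)) \<partial>lborel))"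
    by (subst nn_integral_cmult) (auto simp: nn_integral_add)
  also have "\<dots> < \<infinity>" by (simp add: e1 e2 ennreal_mult_less_top)
  finally show ?thesis .
qed

lemma integrable_exp_norm:
  assumes c: "(c::real) > 0"
  shows "integrable lborel (\<lambda>l::real^'m. exp (-c * norm l))"
proof -
  define N where "N = real CARD('m)"
  have N: "N > 0" by (simp add: N_def)
  define c' where "c' = c / N"
  have c': "c' > 0" using c N by (simp add: c'_def)
  have bnd: "exp (-c * norm l) \<le> (\<Prod>b\<in>(Basis::(real^'m) set). exp (-c' * \<bar>l \<bullet> b\<bar>))" for l :: "real^'m"
  proof -
    have "(\<Sum>b\<in>(Basis::(real^'m) set). \<bar>l \<bullet> b\<bar>) \<le> (\<Sum>b\<in>(Basis::(real^'m) set). norm l)"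
      by (intro sum_mono Basis_le_norm)
    also have "\<dots> = N * norm l" by (simp add: N_def)
    finally have "c' * (\<Sum>b\<in>(Basis::(real^'m) set). \<bar>l \<bullet> b\<bar>) \<le> c * norm l"
      using c N by (simp add: c'_def field_simps)
    then have "(\<Sum>b\<in>(Basis::(real^'m) set). -c' * \<bar>l \<bullet> b\<bar>) \<ge> -c * norm l"
      by (simp add: sum_negf sum_distrib_left[symmetric])
    then show ?thesis by (simp add: exp_sum[symmetric])
  qed
  have "(\<integral>\<^sup>+l. ennreal (norm (exp (-c * norm l))) \<partial>(lborel::(real^'m) measure)) \<le>
        (\<integral>\<^sup>+l. (\<Prod>b\<in>(Basis::(real^'m) set). ennreal (exp (-c' * \<bar>l \<bullet> b\<bar>))) \<partial>lborel)"
    by (intro nn_integral_mono) (use bnd in \<open>auto simp: prod_ennreal intro: ennreal_leI\<close>)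
  also have "\<dots> = (\<Prod>b\<in>(Basis::(real^'m) set). (\<integral>\<^sup>+t. ennreal (exp (-c' * \<bar>t\<bar>)) \<partial>lborel))"
    by (rule nn_integral_lborel_prod) auto
  also have "\<dots> < \<infinity>"
    using nn_exp_abs_1d[OF c'] by (simp add: less_top power_less_top_ennreal)
  finally show ?thesis
    unfolding integrable_iff_bounded by simp
qed

lemma psiH_meas[measurable]: "psiH \<in> borel_measurable borel"
proof -
  have c[measurable]: "(\<lambda>a::real. a * cosh a) \<in> borel_measurable borel" "(\<lambda>a::real. sinh a) \<in> borel_measurable borel"
    by (intro borel_measurable_continuous_onI continuous_intros)+
  have e: "psiH = (\<lambda>a. if a = 0 then 1 else (a * cosh a) / sinh a)"
    by (auto simp: psiH_def fun_eq_iff)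
  show ?thesis unfolding e by measurable
qed

lemma phiH_meas[measurable]: "phiH \<in> borel_measurable borel"
proof -
  have c[measurable]: "(\<lambda>a::real. sinh a) \<in> borel_measurable borel"
    by (intro borel_measurable_continuous_onI continuous_intros)+
  have e: "phiH = (\<lambda>a. if a = 0 then 1 else a / sinh a)"
    by (auto simp: phiH_def fun_eq_iff)
  show ?thesis unfolding e by measurable
qed

definition EE :: "nat \<Rightarrow> 'm::finite \<Rightarrow> real \<Rightarrow> real \<Rightarrow> real^'m \<Rightarrow> complex" where
  "EE n i1 r s l = exp (\<i> * complex_of_real (s * l $ i1) - complex_of_real (r * psiH (norm l)))
                   * complex_of_real (phiH (norm l) ^ n)"

definition II :: "nat \<Rightarrow> 'm::finite \<Rightarrow> (real^'m \<Rightarrow> complex) \<Rightarrow> real \<Rightarrow> real \<Rightarrow> complex" where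
  "II n i1 P r s = (\<integral>l. EE n i1 r s l * P l \<partial>lborel)"

lemma EE_meas[measurable]: "EE n i1 r s \<in> borel_measurable borel"
  unfolding EE_def by measurable

lemma EE_bound:
  assumes n: "n \<ge> 1" and r: "r \<ge> -1/2"
  shows "norm (EE n i1 r s l) \<le> 4 * exp (1/2) * (1 + norm l) * exp (- norm l / 2)"
proof -
  let ?a = "norm l"
  have ps: "0 \<le> psiH ?a" "psiH ?a \<le> 1 + ?a" using psiH_bounds[of ?a] by auto
  have ph: "0 \<le> phiH ?a" "phiH ?a \<le> 1" "phiH ?a \<le> 4 * (1 + ?a) * exp (- ?a)"
    using phiH_bounds[of ?a] by auto
  have "- r * psiH ?a \<le> (1/2) * psiH ?a" using r ps by (intro mult_right_mono) auto
  also have "\<dots> \<le> (1 + ?a) / 2" using ps by simp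
  finally have e1: "exp (- r * psiH ?a) \<le> exp ((1 + ?a) / 2)" by simp
  have "phiH ?a ^ n \<le> phiH ?a" using power_decreasing[of 1 n "phiH ?a"] ph n by simp
  also have "\<dots> \<le> 4 * (1 + ?a) * exp (- ?a)" by (rule ph)
  finally have e2: "phiH ?a ^ n \<le> 4 * (1 + ?a) * exp (- ?a)" .
  have "norm (EE n i1 r s l) = exp (- r * psiH ?a) * phiH ?a ^ n"
    using ph by (simp add: EE_def norm_mult norm_exp_eq_Re norm_power)
  also have "\<dots> \<le> exp ((1 + ?a) / 2) * (4 * (1 + ?a) * exp (- ?a))"
    using e1 e2 ph by (intro mult_mono) auto
  also have "\<dots> = 4 * exp (1/2) * (1 + ?a) * exp (- ?a / 2)"
    by (simp add: mult_exp_exp[symmetric] field_simps flip: exp_add)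
  finally show ?thesis .
qed


lemma W_int: "integrable lborel (\<lambda>l::real^'m::finite. (1 + norm l) ^ k * exp (- norm l / 2))"
proof -
  let ?C = "(4 * real k + 4) ^ k"
  have "integrable lborel (\<lambda>l::real^'m. ?C * exp (-(1/4) * norm l))"
    using integrable_exp_norm[of "1/4"] by simp
  then show ?thesis
  proof (rule Bochner_Integration.integrable_bound)
    show "(\<lambda>l::real^'m. (1 + norm l) ^ k * exp (- norm l / 2)) \<in> borel_measurable lborel" by measurable
    show "AE l in lborel. norm ((1 + norm l) ^ k * exp (- norm l / 2)) \<le> norm (?C * exp (-(1/4) * norm (l::real^'m)))"
    proof (rule AE_I2)
      fix l :: "real^'m"
      have "(1 + norm l) ^ k * exp (- norm l / 2) \<le> (?C * exp (norm l / 4)) * exp (- norm l / 2)"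
        using poly_le_exp[of "norm l" k] by (intro mult_right_mono) auto
      also have "\<dots> = ?C * exp (-(1/4) * norm l)"
        by (simp add: mult.assoc flip: exp_add)
      finally show "norm ((1 + norm l) ^ k * exp (- norm l / 2)) \<le> norm (?C * exp (-(1/4) * norm l))"
        by simp
    qed
  qed
qed

definition pb :: "(real^'m::finite \<Rightarrow> complex) \<Rightarrow> nat \<Rightarrow> bool" where
  "pb P k \<longleftrightarrow> P \<in> borel_measurable borel \<and> (\<exists>K. \<forall>l. norm (P l) \<le> K * (1 + norm l) ^ k)"

lemma pb_one: "pb (\<lambda>_. 1) 0" by (auto simp: pb_def intro!: exI[of _ 1])

lemma pb_l1: assumes "pb P k" shows "pb (\<lambda>l. complex_of_real (l $ i1) * P l) (Suc k)"
proof -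
  from assms obtain K where K: "\<And>l. norm (P l) \<le> K * (1 + norm l) ^ k" and m: "P \<in> borel_measurable borel"
    by (auto simp: pb_def)
  have "norm (complex_of_real (l $ i1) * P l) \<le> K * (1 + norm l) ^ Suc k" for l :: "real^'a"
  proof -
    have "\<bar>l $ i1\<bar> \<le> 1 + norm l" using component_le_norm_cart[of l i1] by simp
    then have "norm (complex_of_real (l $ i1) * P l) \<le> (1 + norm l) * (K * (1 + norm l) ^ k)"
      by (simp add: norm_mult) (intro mult_mono K, auto)
    then show ?thesis by (simp add: algebra_simps)
  qed
  then show ?thesis using m by (auto simp: pb_def)
qed

lemma pb_psi: assumes "pb P k" shows "pb (\<lambda>l. complex_of_real (psiH (norm l)) * P l) (Suc k)"
proof -
  from assms obtain K where K: "\<And>l. norm (P l) \<le> K * (1 + norm l) ^ k" and m: "P \<in> borel_measurable borel"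
    by (auto simp: pb_def)
  have "norm (complex_of_real (psiH (norm l)) * P l) \<le> K * (1 + norm l) ^ Suc k" for l :: "real^'a"
  proof -
    have "\<bar>psiH (norm l)\<bar> \<le> 1 + norm l" using psiH_bounds[of "norm l"] by simp
    then have "norm (complex_of_real (psiH (norm l)) * P l) \<le> (1 + norm l) * (K * (1 + norm l) ^ k)"
      by (simp add: norm_mult) (intro mult_mono K, auto)
    then show ?thesis by (simp add: algebra_simps)
  qed
  then show ?thesis using m by (auto simp: pb_def)
qed

lemma EP_int:
  assumes n: "n \<ge> 1" and r: "r \<ge> -1/2" and P: "pb P k"
  shows "integrable lborel (\<lambda>l. EE n i1 r s l * P l)"
proof -
  from P obtain K where K: "\<And>l. norm (P l) \<le> K * (1 + norm l) ^ k" and m[measurable]: "P \<in> borel_measurable borel"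
    by (auto simp: pb_def)
  have "integrable lborel (\<lambda>l::real^'a. (4 * exp (1/2) * K) * ((1 + norm l) ^ Suc k * exp (- norm l / 2)))"
    by (intro integrable_mult_right W_int)
  then show ?thesis
  proof (rule Bochner_Integration.integrable_bound)
    show "(\<lambda>l. EE n i1 r s l * P l) \<in> borel_measurable lborel" by measurable
    show "AE l in lborel. norm (EE n i1 r s l * P l) \<le> norm ((4 * exp (1/2) * K) * ((1 + norm l) ^ Suc k * exp (- norm l / 2)))"
    proof (rule AE_I2)
      fix l
      have "norm (EE n i1 r s l * P l) \<le> (4 * exp (1/2) * (1 + norm l) * exp (- norm l / 2)) * (K * (1 + norm l) ^ k)"
        unfolding norm_mult by (intro mult_mono EE_bound n r K) auto
      also have "\<dots> = (4 * exp (1/2) * K) * ((1 + norm l) ^ Suc k * exp (- norm l / 2))"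
        by (simp add: algebra_simps)
      also have "\<dots> \<le> norm \<dots>" by simp
      finally show "norm (EE n i1 r s l * P l) \<le> norm ((4 * exp (1/2) * K) * ((1 + norm l) ^ Suc k * exp (- norm l / 2)))" .
    qed
  qed
qed


lemma EE_vderiv:
  assumes da: "(a has_real_derivative a') (at u)" and db: "(b has_real_derivative b') (at u)"
  shows "((\<lambda>u. EE n i1 (a u) (b u) l * P l) has_vector_derivative
          EE n i1 (a u) (b u) l * ((\<i> * complex_of_real b' * complex_of_real (l $ i1)
              - complex_of_real a' * complex_of_real (psiH (norm l))) * P l)) (at u)"
proof -
  let ?G = "\<lambda>u. \<i> * complex_of_real (b u * l $ i1) - complex_of_real (a u * psiH (norm l))"
  let ?G' = "\<i> * complex_of_real (b' * l $ i1) - complex_of_real (a' * psiH (norm l))"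
  have dG: "(?G has_vector_derivative ?G') (at u)"
    by (intro derivative_intros DERIV_cmult_right da db)
  have "((exp \<circ> ?G) has_vector_derivative (?G' * exp (?G u))) (at u)"
    by (rule field_vector_diff_chain_at[OF dG DERIV_exp])
  then have "((\<lambda>u. exp (?G u) * (complex_of_real (phiH (norm l) ^ n) * P l)) has_vector_derivative
       (?G' * exp (?G u)) * (complex_of_real (phiH (norm l) ^ n) * P l)) (at u)"
    by (intro has_vector_derivative_mult_left) (simp add: o_def)
  then show ?thesis
    by (simp add: EE_def algebra_simps)
qed

lemma II_deriv:
  fixes a b a' b' :: "real \<Rightarrow> real"
  assumes n: "n \<ge> 1" and P: "pb P k" and T: "open T" "u0 \<in> T"
    and da: "\<And>u. u \<in> T \<Longrightarrow> (a has_real_derivative a' u) (at u)"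
    and db: "\<And>u. u \<in> T \<Longrightarrow> (b has_real_derivative b' u) (at u)"
    and ca: "continuous_on T a'" and cb: "continuous_on T b'"
    and ag: "\<And>u. u \<in> T \<Longrightarrow> a u \<ge> -1/2"
  shows "((\<lambda>u. II n i1 P (a u) (b u)) has_vector_derivative
           (\<i> * complex_of_real (b' u0) * II n i1 (\<lambda>l. complex_of_real (l $ i1) * P l) (a u0) (b u0)
            - complex_of_real (a' u0) * II n i1 (\<lambda>l. complex_of_real (psiH (norm l)) * P l) (a u0) (b u0))) (at u0)"
proof -
  obtain d where d: "d > 0" "cball u0 d \<subseteq> T" using T open_contains_cball by blast
  have c1: "compact (a' ` cball u0 d)" and c2: "compact (b' ` cball u0 d)"
    using d by (auto intro!: compact_continuous_image continuous_on_subset[OF ca] continuous_on_subset[OF cb])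
  obtain Ma where Ma': "\<forall>x\<in>a' ` cball u0 d. \<bar>x\<bar> \<le> Ma"
    using compact_imp_bounded[OF c1] unfolding bounded_real by blast
  obtain Mb where Mb': "\<forall>x\<in>b' ` cball u0 d. \<bar>x\<bar> \<le> Mb"
    using compact_imp_bounded[OF c2] unfolding bounded_real by blast
  have Ma: "\<And>u. u \<in> cball u0 d \<Longrightarrow> \<bar>a' u\<bar> \<le> Ma" using Ma' by blast
  have Mb: "\<And>u. u \<in> cball u0 d \<Longrightarrow> \<bar>b' u\<bar> \<le> Mb" using Mb' by blast
  from P obtain K where K: "\<And>l. norm (P l) \<le> K * (1 + norm l) ^ k" and Pm[measurable]: "P \<in> borel_measurable borel"
    by (auto simp: pb_def)
  have "norm (P 0) \<le> K" using K[of 0] by simp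
  then have K0: "K \<ge> 0" by (meson norm_ge_zero order_trans)
  have Ma0: "Ma \<ge> 0" and Mb0: "Mb \<ge> 0" using Ma[of u0] Mb[of u0] d by auto
  define f where "f u l = EE n i1 (a u) (b u) l * P l" for u l
  define f' where "f' u l = EE n i1 (a u) (b u) l * ((\<i> * complex_of_real (b' u) * complex_of_real (l $ i1)
              - complex_of_real (a' u) * complex_of_real (psiH (norm l))) * P l)" for u l
  define w where "w l = (4 * exp (1/2) * (Ma + Mb) * K) * ((1 + norm l) ^ (Suc (Suc k)) * exp (- norm l / 2))" for l :: "real^'a"
  have ball: "u \<in> T" "u \<in> cball u0 d" if "u \<in> ball u0 d" for u using that d by auto
  have "((\<lambda>u. \<integral>l. f u l \<partial>lborel) has_vector_derivative (\<integral>l. f' u0 l \<partial>lborel)) (at u0)"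
  proof (rule DI_abs[OF d(1), where w=w])
    show "((\<lambda>u. f u l) has_vector_derivative f' u l) (at u)" if "u \<in> ball u0 d" for u l
      unfolding f_def f'_def by (rule EE_vderiv[OF da db]) (use ball[OF that] in auto)
    show "f u \<in> borel_measurable lborel" for u unfolding f_def by measurable
    show "f' u0 \<in> borel_measurable lborel" unfolding f'_def by measurable
    show "integrable lborel w" unfolding w_def by (intro integrable_mult_right W_int)
    show "integrable lborel (f u0)" unfolding f_def using T(2) ag by (intro EP_int[OF n _ P]) auto
    show "norm (f' u l) \<le> w l" if "u \<in> ball u0 d" for u l
    proof -
      have ps: "0 \<le> psiH (norm l)" "psiH (norm l) \<le> 1 + norm l" using psiH_bounds[of "norm l"] by auto
      have l1: "\<bar>l $ i1\<bar> \<le> 1 + norm l" using component_le_norm_cart[of l i1] by simp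
      have "norm (\<i> * complex_of_real (b' u) * complex_of_real (l $ i1)
              - complex_of_real (a' u) * complex_of_real (psiH (norm l)))
            \<le> \<bar>b' u\<bar> * \<bar>l $ i1\<bar> + \<bar>a' u\<bar> * \<bar>psiH (norm l)\<bar>"
        by (rule order_trans[OF norm_triangle_ineq4]) (simp add: norm_mult)
      also have "\<dots> \<le> Mb * (1 + norm l) + Ma * (1 + norm l)"
        using Ma[OF ball(2)[OF that]] Mb[OF ball(2)[OF that]] ps l1
        by (intro add_mono mult_mono) auto
      finally have c: "norm (\<i> * complex_of_real (b' u) * complex_of_real (l $ i1)
              - complex_of_real (a' u) * complex_of_real (psiH (norm l))) \<le> (Ma + Mb) * (1 + norm l)"
        by (simp add: algebra_simps)
      have "norm (f' u l) \<le> (4 * exp (1/2) * (1 + norm l) * exp (- norm l / 2)) * (((Ma + Mb) * (1 + norm l)) * (K * (1 + norm l) ^ k))"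
        unfolding f'_def norm_mult
        by (intro mult_mono EE_bound n ag ball[OF that] c K) (use Ma0 Mb0 K0 in auto)
      also have "\<dots> = w l" by (simp add: w_def algebra_simps)
      finally show ?thesis .
    qed
  qed
  moreover have "(\<integral>l. f' u0 l \<partial>lborel) = \<i> * complex_of_real (b' u0) * II n i1 (\<lambda>l. complex_of_real (l $ i1) * P l) (a u0) (b u0)
            - complex_of_real (a' u0) * II n i1 (\<lambda>l. complex_of_real (psiH (norm l)) * P l) (a u0) (b u0)"
  proof -
    have a0: "a u0 \<ge> -1/2" using ag T by auto
    have i1: "integrable lborel (\<lambda>l. EE n i1 (a u0) (b u0) l * (complex_of_real (l $ i1) * P l))"
      by (rule EP_int[OF n a0 pb_l1[OF P]])
    have i2: "integrable lborel (\<lambda>l. EE n i1 (a u0) (b u0) l * (complex_of_real (psiH (norm l)) * P l))"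
      by (rule EP_int[OF n a0 pb_psi[OF P]])
    have "f' u0 = (\<lambda>l. \<i> * complex_of_real (b' u0) * (EE n i1 (a u0) (b u0) l * (complex_of_real (l $ i1) * P l))
         - complex_of_real (a' u0) * (EE n i1 (a u0) (b u0) l * (complex_of_real (psiH (norm l)) * P l)))"
      by (auto simp: f'_def fun_eq_iff algebra_simps)
    then show ?thesis using i1 i2 by (simp add: II_def)
  qed
  ultimately show ?thesis by (simp add: f_def II_def)
qed

lemma heat_hfun:
  fixes x :: "real^'v" and z :: "real^'m::finite" and i1 :: 'm
  shows "heat_kernel n 1 x z = hfun n i1 (norm x ^ 2 / 4) (norm z)"
proof -
  have "norm z = norm (norm z *\<^sub>R (axis i1 1 :: real^'m))" by simp
  then obtain f :: "real^'m \<Rightarrow> real^'m" where f: "orthogonal_transformation f" "f z = norm z *\<^sub>R axis i1 1"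
    by (rule orthogonal_transformation_exists)
  define H where "H k = exp (\<i> * complex_of_real (norm z * k $ i1) - complex_of_real (norm x ^ 2 / 4 * psiH (norm k)))
                   * complex_of_real (phiH (norm k) ^ n)" for k :: "real^'m"
  have Hm: "H \<in> borel_measurable borel" unfolding H_def by measurable
  have eq: "exp (\<i> * complex_of_real ((l \<bullet> z) / 1) - complex_of_real (norm x ^ 2 / (4 * 1) * psiH (norm l)))
         * complex_of_real (phiH (norm l) ^ n) = H (f l)" for l
  proof -
    have "l \<bullet> z = f l \<bullet> f z" using f(1) by (simp add: orthogonal_transformation_def)
    also have "\<dots> = norm z * (f l $ i1)" using f(2) by (simp add: inner_axis)
    finally have "l \<bullet> z = norm z * (f l $ i1)" .
    moreover have "norm (f l) = norm l" using f(1) by (simp add: orthogonal_transformation_norm)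
    ultimately show ?thesis by (simp add: H_def)
  qed
  have "(\<integral>l. exp (\<i> * complex_of_real ((l \<bullet> z) / 1) - complex_of_real (norm x ^ 2 / (4 * 1) * psiH (norm l)))
         * complex_of_real (phiH (norm l) ^ n) \<partial>lborel) = (\<integral>l. H (f l) \<partial>lborel)"
    by (simp only: eq)
  also have "\<dots> = (\<integral>l. H l \<partial>lborel)" by (rule integral_orth_inv[OF f(1) Hm])
  finally show ?thesis
    unfolding heat_kernel_def hfun_def H_def by simp
qed

definition c0 :: "nat \<Rightarrow> 'm::finite itself \<Rightarrow> real" where
  "c0 n TYPE('m) = 1 / ((4*pi)^n * (2*pi)^CARD('m))"

lemma hfun_II: "hfun n i1 r s = c0 n TYPE('m) * Re (II n (i1::'m::finite) (\<lambda>_. 1) r s)"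
  by (simp add: hfun_def II_def EE_def c0_def)

lemma re_deriv:
  assumes "(F has_vector_derivative F') (at u)"
  shows "((\<lambda>u. c * Re (F u)) has_real_derivative (c * Re F')) (at u)"
proof -
  have "((\<lambda>u. Re (F u)) has_vector_derivative Re F') (at u)"
    by (rule bounded_linear.has_vector_derivative[OF bounded_linear_Re assms])
  then have "((\<lambda>u. Re (F u)) has_real_derivative Re F') (at u)"
    by (simp add: has_real_derivative_iff_has_vector_derivative)
  then show ?thesis by (intro DERIV_cmult)
qed

lemma II_deriv_r:
  assumes n: "n \<ge> 1" and P: "pb P k" and r: "r > -1/2"
  shows "((\<lambda>r. II n i1 P r s) has_vector_derivative - II n i1 (\<lambda>l. complex_of_real (psiH (norm l)) * P l) r s) (at r)"
proof -
  have "((\<lambda>u. II n i1 P ((\<lambda>u. u) u) ((\<lambda>_. s) u)) has_vector_derivative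
           (\<i> * complex_of_real ((\<lambda>_. 0) r) * II n i1 (\<lambda>l. complex_of_real (l $ i1) * P l) ((\<lambda>u. u) r) ((\<lambda>_. s) r)
            - complex_of_real ((\<lambda>_. 1) r) * II n i1 (\<lambda>l. complex_of_real (psiH (norm l)) * P l) ((\<lambda>u. u) r) ((\<lambda>_. s) r))) (at r)"
    by (rule II_deriv[OF n P, where T="{-1/2<..}"]) (use r in \<open>auto intro!: derivative_eq_intros\<close>)
  then show ?thesis by simp
qed

lemma II_deriv_s:
  assumes n: "n \<ge> 1" and P: "pb P k" and r: "r > -1/2"
  shows "((\<lambda>s. II n i1 P r s) has_vector_derivative \<i> * II n i1 (\<lambda>l. complex_of_real (l $ i1) * P l) r s) (at s)"
proof -
  have "((\<lambda>u. II n i1 P ((\<lambda>_. r) u) ((\<lambda>u. u) u)) has_vector_derivative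
           (\<i> * complex_of_real ((\<lambda>_. 1) s) * II n i1 (\<lambda>l. complex_of_real (l $ i1) * P l) ((\<lambda>_. r) s) ((\<lambda>u. u) s)
            - complex_of_real ((\<lambda>_. 0) s) * II n i1 (\<lambda>l. complex_of_real (psiH (norm l)) * P l) ((\<lambda>_. r) s) ((\<lambda>u. u) s))) (at s)"
    by (rule II_deriv[OF n P, where T="UNIV"]) (use r in \<open>auto intro!: derivative_eq_intros\<close>)
  then show ?thesis by simp
qed


definition "hr n (i1::'m::finite) r s = c0 n TYPE('m) * Re (- II n i1 (\<lambda>l. complex_of_real (psiH (norm l))) r s)"
definition "hrr n (i1::'m::finite) r s = c0 n TYPE('m) * Re (II n i1 (\<lambda>l. complex_of_real (psiH (norm l)) * complex_of_real (psiH (norm l))) r s)"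
definition "hs n (i1::'m::finite) r s = c0 n TYPE('m) * Re (\<i> * II n i1 (\<lambda>l. complex_of_real (l $ i1)) r s)"
definition "hss n (i1::'m::finite) r s = c0 n TYPE('m) * Re (- II n i1 (\<lambda>l. complex_of_real (l $ i1) * complex_of_real (l $ i1)) r s)"

lemma pb_psi1: "pb (\<lambda>l. complex_of_real (psiH (norm l))) 1"
  using pb_psi[OF pb_one] by simp
lemma pb_l11: "pb (\<lambda>l::real^'m::finite. complex_of_real (l $ i1)) 1"
  using pb_l1[OF pb_one, of i1] by simp

lemma D_hr: assumes n: "n \<ge> 1" and r: "r > -1/2"
  shows "((\<lambda>r. hfun n i1 r s) has_real_derivative hr n i1 r s) (at r)"
  using re_deriv[OF II_deriv_r[OF n pb_one r, of i1 s], of "c0 n TYPE('a)"]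
  by (simp add: hfun_II[abs_def] hr_def)

lemma D_hrr: assumes n: "n \<ge> 1" and r: "r > -1/2"
  shows "((\<lambda>r. hr n i1 r s) has_real_derivative hrr n i1 r s) (at r)"
  using re_deriv[OF II_deriv_r[OF n pb_psi1 r, of i1 s], of "- c0 n TYPE('a)"]
  by (simp add: hr_def hrr_def)

lemma D_hs: assumes n: "n \<ge> 1" and r: "r > -1/2"
  shows "((\<lambda>s. hfun n i1 r s) has_real_derivative hs n i1 r s) (at s)"
  using re_deriv[OF II_deriv_s[OF n pb_one r, of i1 s], of "c0 n TYPE('a)"]
  by (simp add: hfun_II[abs_def] hs_def)

lemma D_hss: assumes n: "n \<ge> 1" and r: "r > -1/2"
  shows "((\<lambda>s. hs n i1 r s) has_real_derivative hss n i1 r s) (at s)"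
proof -
  have "((\<lambda>s. \<i> * II n i1 (\<lambda>l. complex_of_real (l $ i1)) r s) has_vector_derivative
        \<i> * (\<i> * II n i1 (\<lambda>l. complex_of_real (l $ i1) * complex_of_real (l $ i1)) r s)) (at s)"
    by (intro has_vector_derivative_mult_right II_deriv_s[OF n pb_l11 r])
  from re_deriv[OF this, of "c0 n TYPE('a)"] show ?thesis
    by (simp add: hs_def hss_def)
qed

lemma hder_vals:
  assumes n: "n \<ge> 1" and r: "r > -1/2"
  shows "hder n i1 0 0 r s = hfun n i1 r s"
    and "hder n i1 1 0 r s = hr n i1 r s"
    and "hder n i1 2 0 r s = hrr n i1 r s"
    and "hder n i1 0 1 r s = hs n i1 r s"
    and "hder n i1 0 2 r s = hss n i1 r s"
proof -
  show "hder n i1 0 0 r s = hfun n i1 r s" by (simp add: hder_def)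
  show "hder n i1 1 0 r s = hr n i1 r s"
    using DERIV_imp_deriv[OF D_hr[OF n r, of i1 s]] by (simp add: hder_def)
  have "deriv (\<lambda>r. hfun n i1 r s) r' = hr n i1 r' s" if "r' > -1/2" for r'
    using D_hr[OF n that] by (rule DERIV_imp_deriv)
  note dd = this
  have "eventually (\<lambda>y. y \<in> {-1/2<..}) (nhds r)"
    by (intro eventually_nhds_in_open) (use r in auto)
  then have ev: "\<forall>\<^sub>F r' in nhds r. deriv (\<lambda>r. hfun n i1 r s) r' = hr n i1 r' s"
    by eventually_elim (use dd in auto)
  have "hder n i1 2 0 r s = deriv (deriv (\<lambda>r. hfun n i1 r s)) r"
    by (simp add: hder_def numeral_2_eq_2)
  also have "\<dots> = deriv (\<lambda>r'. hr n i1 r' s) r"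
    by (rule deriv_cong_ev[OF ev refl])
  also have "\<dots> = hrr n i1 r s" using D_hrr[OF n r] by (rule DERIV_imp_deriv)
  finally show "hder n i1 2 0 r s = hrr n i1 r s" .
  show "hder n i1 0 1 r s = hs n i1 r s"
    using DERIV_imp_deriv[OF D_hs[OF n r, of i1 s]] by (simp add: hder_def)
  have "deriv (\<lambda>s. hfun n i1 r s) = (\<lambda>s. hs n i1 r s)"
    using D_hs[OF n r] by (auto intro!: DERIV_imp_deriv)
  then have "hder n i1 0 2 r s = deriv (\<lambda>s. hs n i1 r s) s"
    by (simp add: hder_def numeral_2_eq_2)
  also have "\<dots> = hss n i1 r s" using D_hss[OF n r] by (rule DERIV_imp_deriv)
  finally show "hder n i1 0 2 r s = hss n i1 r s" .
qed

definition "Mx n (i1::'m::finite) r s = c0 n TYPE('m) * Re (- \<i> * II n i1 (\<lambda>l. complex_of_real (l $ i1) * complex_of_real (psiH (norm l))) r s)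
   + c0 n TYPE('m) * Re (- \<i> * II n i1 (\<lambda>l. complex_of_real (psiH (norm l)) * complex_of_real (l $ i1)) r s)"

lemma F_derivs:
  fixes x e :: "real^'v" and z w :: "real^'m::finite" and i1 :: 'm
  assumes n: "n \<ge> 1" and z: "z \<noteq> 0"
  defines "F \<equiv> \<lambda>u. hfun n i1 (norm (x + u *\<^sub>R e) ^ 2 / 4) (norm (z + u *\<^sub>R w))"
  defines "R0 \<equiv> norm x ^ 2 / 4" and "S0 \<equiv> norm z"
  shows "deriv F 0 = (x \<bullet> e) / 2 * hr n i1 R0 S0 + (z \<bullet> w) / norm z * hs n i1 R0 S0"
    and "deriv (deriv F) 0 = (e \<bullet> e) / 2 * hr n i1 R0 S0 + ((x \<bullet> e) / 2)^2 * hrr n i1 R0 S0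
          + ((w \<bullet> w) / norm z - (z \<bullet> w)^2 / norm z ^ 3) * hs n i1 R0 S0
          + ((z \<bullet> w) / norm z)^2 * hss n i1 R0 S0
          + (x \<bullet> e) / 2 * ((z \<bullet> w) / norm z) * Mx n i1 R0 S0"
proof -
  define Q where "Q u = z \<bullet> z + 2 * u * (z \<bullet> w) + u^2 * (w \<bullet> w)" for u
  define Ra where "Ra u = (x \<bullet> x + 2 * u * (x \<bullet> e) + u^2 * (e \<bullet> e)) / 4" for u
  define Ra' where "Ra' u = ((x \<bullet> e) + u * (e \<bullet> e)) / 2" for u
  define Sa where "Sa u = sqrt (Q u)" for u
  define Sa' where "Sa' u = ((z \<bullet> w) + u * (w \<bullet> w)) / sqrt (Q u)" for u
  have Qn: "Q u = norm (z + u *\<^sub>R w) ^ 2" for u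
    unfolding power2_norm_eq_inner Q_def by (simp add: inner_add_left inner_add_right inner_commute power2_eq_square algebra_simps)
  have Ran: "Ra u = norm (x + u *\<^sub>R e) ^ 2 / 4" for u
    unfolding power2_norm_eq_inner Ra_def by (simp add: inner_add_left inner_add_right inner_commute power2_eq_square algebra_simps)
  have San: "Sa u = norm (z + u *\<^sub>R w)" for u by (simp add: Sa_def Qn)
  have Fe: "F = (\<lambda>u. hfun n i1 (Ra u) (Sa u))" by (simp add: F_def Ran San)
  define T where "T = {u. 0 < Q u}"
  have Topen: "open T" unfolding T_def Q_def by (intro open_Collect_less continuous_intros)
  have T0: "0 \<in> T" using z by (simp add: T_def Q_def)
  have Q0: "Q 0 = norm z ^ 2" by (simp add: Qn)
  have dRa: "(Ra has_real_derivative Ra' u) (at u)" for u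
    unfolding Ra_def Ra'_def by (auto intro!: derivative_eq_intros simp: field_simps)
  have dSa: "(Sa has_real_derivative Sa' u) (at u)" if "u \<in> T" for u
  proof -
    have "((\<lambda>u. sqrt (Q u)) has_real_derivative (inverse (sqrt (Q u)) / 2 * (2 * (z \<bullet> w) + 2 * u * (w \<bullet> w)))) (at u)"
      unfolding Q_def using that unfolding T_def Q_def
      by (auto intro!: derivative_eq_intros simp: field_simps)
    moreover have "sqrt (Q u) > 0" using that by (simp add: T_def)
    ultimately show ?thesis unfolding Sa_def Sa'_def
      by (rule_tac DERIV_cong) (auto simp: field_simps)
  qed
  have cRa': "continuous_on T Ra'" unfolding Ra'_def by (intro continuous_intros) auto
  have cSa': "continuous_on T Sa'" unfolding Sa'_def T_def Q_def
    by (intro continuous_intros) auto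
  have Rag: "Ra u \<ge> -1/2" for u unfolding Ran using zero_le_power2[of "norm (x + u *\<^sub>R e)"] by linarith
  have II1: "II n i1 (\<lambda>l. complex_of_real (l $ i1) * 1) = II n i1 (\<lambda>l. complex_of_real (l $ i1))"
           "II n i1 (\<lambda>l. complex_of_real (psiH (norm l)) * 1) = II n i1 (\<lambda>l. complex_of_real (psiH (norm l)))"
    by simp_all
  define G where "G u = Ra' u * hr n i1 (Ra u) (Sa u) + Sa' u * hs n i1 (Ra u) (Sa u)" for u
  have dF: "(F has_real_derivative G u) (at u)" if u: "u \<in> T" for u
  proof -
    have "((\<lambda>u. II n i1 (\<lambda>_. 1) (Ra u) (Sa u)) has_vector_derivative
           (\<i> * complex_of_real (Sa' u) * II n i1 (\<lambda>l. complex_of_real (l $ i1) * 1) (Ra u) (Sa u)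
            - complex_of_real (Ra' u) * II n i1 (\<lambda>l. complex_of_real (psiH (norm l)) * 1) (Ra u) (Sa u))) (at u)"
      by (rule II_deriv[OF n pb_one Topen u dRa dSa cRa' cSa' Rag])
    from re_deriv[OF this, of "c0 n TYPE('m)"] show ?thesis
      unfolding Fe hfun_II G_def II1 hr_def hs_def by (rule DERIV_cong) (simp add: algebra_simps)
  qed
  have Ra0: "Ra 0 = R0" by (simp add: Ran R0_def)
  have Sa0: "Sa 0 = S0" by (simp add: San S0_def)
  have sQ0: "sqrt (Q 0) = norm z" by (simp add: Q0)
  show "deriv F 0 = (x \<bullet> e) / 2 * hr n i1 R0 S0 + (z \<bullet> w) / norm z * hs n i1 R0 S0"
    using DERIV_imp_deriv[OF dF[OF T0]] by (simp add: G_def Ra0 Sa0 Ra'_def Sa'_def sQ0)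
  show "deriv (deriv F) 0 = (e \<bullet> e) / 2 * hr n i1 R0 S0 + ((x \<bullet> e) / 2)^2 * hrr n i1 R0 S0
          + ((w \<bullet> w) / norm z - (z \<bullet> w)^2 / norm z ^ 3) * hs n i1 R0 S0
          + ((z \<bullet> w) / norm z)^2 * hss n i1 R0 S0
          + (x \<bullet> e) / 2 * ((z \<bullet> w) / norm z) * Mx n i1 R0 S0"
  proof -
    have "eventually (\<lambda>y. y \<in> T) (nhds 0)" by (intro eventually_nhds_in_open Topen T0)
    then have ev: "\<forall>\<^sub>F u in nhds 0. deriv F u = G u"
      by eventually_elim (use dF in \<open>auto intro: DERIV_imp_deriv\<close>)
    have nz: "norm z > 0" using z by simp
    define A where "A = z \<bullet> w"
    define W where "W = w \<bullet> w"
    have dRa': "(Ra' has_real_derivative (e \<bullet> e) / 2) (at 0)"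
      unfolding Ra'_def by (auto intro!: derivative_eq_intros)
    have dSa': "(Sa' has_real_derivative (W / norm z - A^2 / norm z ^ 3)) (at 0)"
    proof -
      have "(Sa' has_real_derivative
          ((W * sqrt (Q 0) - (A + 0 * W) * (inverse (sqrt (Q 0)) / 2 * (2 * A + 2 * 0 * W))) / (sqrt (Q 0) * sqrt (Q 0)))) (at 0)"
        unfolding Sa'_def A_def W_def Q_def using z
        by (auto intro!: derivative_eq_intros simp: power2_eq_square) (metis inner_ge_zero not_le)
      then show ?thesis
        by (rule DERIV_cong) (use nz in \<open>simp add: sQ0 field_simps power2_eq_square power3_eq_cube\<close>)
    qed
    have dhr: "((\<lambda>u. hr n i1 (Ra u) (Sa u)) has_real_derivative
          (Sa' 0 * (c0 n TYPE('m) * Re (- \<i> * II n i1 (\<lambda>l. complex_of_real (l $ i1) * complex_of_real (psiH (norm l))) R0 S0))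
           + Ra' 0 * hrr n i1 R0 S0)) (at 0)"
    proof -
      have dv: "((\<lambda>u. II n i1 (\<lambda>l. complex_of_real (psiH (norm l))) (Ra u) (Sa u)) has_vector_derivative
           (\<i> * complex_of_real (Sa' 0) * II n i1 (\<lambda>l. complex_of_real (l $ i1) * complex_of_real (psiH (norm l))) (Ra 0) (Sa 0)
            - complex_of_real (Ra' 0) * II n i1 (\<lambda>l. complex_of_real (psiH (norm l)) * complex_of_real (psiH (norm l))) (Ra 0) (Sa 0))) (at 0)"
        by (rule II_deriv[OF n pb_psi1 Topen T0 dRa dSa cRa' cSa' Rag])
      have e: "(\<lambda>u. hr n i1 (Ra u) (Sa u)) = (\<lambda>u. - c0 n TYPE('m) * Re (II n i1 (\<lambda>l. complex_of_real (psiH (norm l))) (Ra u) (Sa u)))"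
        by (simp add: hr_def fun_eq_iff)
      from re_deriv[OF dv, of "- c0 n TYPE('m)"] show ?thesis
        unfolding e hrr_def Ra0 Sa0 by (rule DERIV_cong) (simp add: algebra_simps)
    qed
    have dhs: "((\<lambda>u. hs n i1 (Ra u) (Sa u)) has_real_derivative
          (Sa' 0 * hss n i1 R0 S0
           + Ra' 0 * (c0 n TYPE('m) * Re (- \<i> * II n i1 (\<lambda>l. complex_of_real (psiH (norm l)) * complex_of_real (l $ i1)) R0 S0)))) (at 0)"
    proof -
      have "((\<lambda>u. II n i1 (\<lambda>l. complex_of_real (l $ i1)) (Ra u) (Sa u)) has_vector_derivative
           (\<i> * complex_of_real (Sa' 0) * II n i1 (\<lambda>l. complex_of_real (l $ i1) * complex_of_real (l $ i1)) (Ra 0) (Sa 0)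
            - complex_of_real (Ra' 0) * II n i1 (\<lambda>l. complex_of_real (psiH (norm l)) * complex_of_real (l $ i1)) (Ra 0) (Sa 0))) (at 0)"
        by (rule II_deriv[OF n pb_l11 Topen T0 dRa dSa cRa' cSa' Rag])
      then have dv: "((\<lambda>u. \<i> * II n i1 (\<lambda>l. complex_of_real (l $ i1)) (Ra u) (Sa u)) has_vector_derivative
           \<i> * (\<i> * complex_of_real (Sa' 0) * II n i1 (\<lambda>l. complex_of_real (l $ i1) * complex_of_real (l $ i1)) (Ra 0) (Sa 0)
            - complex_of_real (Ra' 0) * II n i1 (\<lambda>l. complex_of_real (psiH (norm l)) * complex_of_real (l $ i1)) (Ra 0) (Sa 0))) (at 0)"
        by (rule has_vector_derivative_mult_right)
      have e: "(\<lambda>u. hs n i1 (Ra u) (Sa u)) = (\<lambda>u. c0 n TYPE('m) * Re (\<i> * II n i1 (\<lambda>l. complex_of_real (l $ i1)) (Ra u) (Sa u)))"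
        by (simp add: hs_def fun_eq_iff)
      from re_deriv[OF dv, of "c0 n TYPE('m)"] show ?thesis
        unfolding e hss_def Ra0 Sa0 by (rule DERIV_cong) (simp add: algebra_simps)
    qed
    have dG: "(G has_real_derivative
        ((e \<bullet> e) / 2 * hr n i1 (Ra 0) (Sa 0) + Ra' 0 * (Sa' 0 * (c0 n TYPE('m) * Re (- \<i> * II n i1 (\<lambda>l. complex_of_real (l $ i1) * complex_of_real (psiH (norm l))) R0 S0))
           + Ra' 0 * hrr n i1 R0 S0)
         + ((W / norm z - A^2 / norm z ^ 3) * hs n i1 (Ra 0) (Sa 0) + Sa' 0 * (Sa' 0 * hss n i1 R0 S0
           + Ra' 0 * (c0 n TYPE('m) * Re (- \<i> * II n i1 (\<lambda>l. complex_of_real (psiH (norm l)) * complex_of_real (l $ i1)) R0 S0)))))) (at 0)"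
      unfolding G_def[abs_def]
      by (rule DERIV_cong[OF DERIV_add[OF DERIV_mult[OF dRa' dhr] DERIV_mult[OF dSa' dhs]]]) (simp add: algebra_simps)
    have "deriv (deriv F) 0 = deriv G 0" by (rule deriv_cong_ev[OF ev refl])
    with DERIV_imp_deriv[OF dG] show ?thesis
      by (simp add: Ra0 Sa0 Ra'_def Sa'_def sQ0 A_def W_def Mx_def algebra_simps power2_eq_square)
  qed
qed

lemma deriv_shift0: "deriv (\<lambda>s. f (t + s)) 0 = deriv f (t::real)"
proof -
  have "(\<lambda>s. f (t + s)) = (\<lambda>s. f (s + t))" by (simp add: add.commute)
  then have "((\<lambda>s. f (t + s)) has_field_derivative D) (at 0) \<longleftrightarrow> (f has_field_derivative D) (at t)" for D
    using DERIV_shift[of f D 0 t] by simp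
  then show ?thesis unfolding deriv_def by simp
qed

lemma vec_expand: "(\<Sum>i\<in>UNIV. x $ i *\<^sub>R axis i (1::real)) = (x::real^'n)"
proof -
  have "(\<Sum>j\<in>UNIV. x $ j * (if i = j then 1 else 0)) = x $ i" for i
    by (simp add: if_distrib[of "(*) _"] sum.delta cong: if_cong)
  then show ?thesis by (simp add: vec_eq_iff axis_def)
qed

lemma norm_sq_vec: "norm (x::real^'n) ^ 2 = (\<Sum>i\<in>UNIV. (x $ i)^2)"
  unfolding power2_norm_eq_inner inner_vec_def by (simp add: power2_eq_square)

lemma Htype_facts:
  fixes B :: "real^'v \<Rightarrow> real^'v \<Rightarrow> real^'m::finite"
  assumes H: "Htype B"
  shows "bilinear B" "\<And>y. B y y = 0" "\<And>x Z. norm Z = 1 \<Longrightarrow> norm (Jmap B Z x) = norm x"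
proof -
  show "bilinear B" using H unfolding Htype_def by blast
  show "B y y = 0" for y
  proof -
    have "B y y = - B y y" using H unfolding Htype_def by blast
    then show ?thesis unfolding vec_eq_iff by simp
  qed
  show "norm Z = 1 \<Longrightarrow> norm (Jmap B Z x) = norm x" for x Z using H unfolding Htype_def by blast
qed


lemma Xfield_eqs:
  fixes B :: "real^'v \<Rightarrow> real^'v \<Rightarrow> real^'m::finite" and x :: "real^'v" and z :: "real^'m" and ia :: 'm and n :: nat and j :: 'v
  assumes H: "Htype B"
  defines "p \<equiv> (\<lambda>g. heat_kernel n 1 (fst g) (snd g) :: real)"
  defines "F \<equiv> (\<lambda>u. hfun n ia (norm (x + u *\<^sub>R axis j 1) ^ 2 / 4) (norm (z + u *\<^sub>R ((1/2) *\<^sub>R B x (axis j 1)))))"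
  shows "Xfield B j p (x, z) = deriv F 0"
    and "Xfield B j (Xfield B j p) (x, z) = deriv (deriv F) 0"
proof -
  have bl: "bilinear B" and Byy: "\<And>y. B y y = 0" using Htype_facts[OF H] by auto
  let ?e = "axis j (1::real) :: real^'v"
  have pF: "p (hmul B (x + t *\<^sub>R ?e, z + (t/2) *\<^sub>R B x ?e) (s *\<^sub>R ?e, 0)) = F (t + s)" for t s
  proof -
    have "B (x + t *\<^sub>R ?e) (s *\<^sub>R ?e) = s *\<^sub>R B x ?e"
      using bl Byy by (simp add: bilinear_ladd bilinear_rmul bilinear_lmul)
    then have "hmul B (x + t *\<^sub>R ?e, z + (t/2) *\<^sub>R B x ?e) (s *\<^sub>R ?e, 0)
          = (x + (t + s) *\<^sub>R ?e, z + (t + s) *\<^sub>R ((1/2) *\<^sub>R B x ?e))"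
      by (simp add: hmul_def algebra_simps add_divide_distrib flip: scaleR_add_left)
    then show ?thesis by (simp add: p_def F_def heat_hfun[of _ _ _ ia])
  qed
  have h0: "hmul B (x, z) (t *\<^sub>R ?e, 0) = (x + t *\<^sub>R ?e, z + (t/2) *\<^sub>R B x ?e)" for t
    using bl by (simp add: hmul_def bilinear_rmul)
  have X1: "Xfield B j p (x + t *\<^sub>R ?e, z + (t/2) *\<^sub>R B x ?e) = deriv F t" for t
    unfolding Xfield_def pF by (rule deriv_shift0)
  show "Xfield B j p (x, z) = deriv F 0"
    using X1[of 0] by simp
  show "Xfield B j (Xfield B j p) (x, z) = deriv (deriv F) 0"
    unfolding Xfield_def[of B j "Xfield B j p"] h0 X1 ..
qed


lemma Jmap_scale: "Jmap B (c *\<^sub>R Z) x = c *\<^sub>R Jmap B Z x"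
  by (simp add: Jmap_def vec_eq_iff)

lemma sums_facts:
  fixes B :: "real^'v \<Rightarrow> real^'v \<Rightarrow> real^'m::finite" and x :: "real^'v" and z :: "real^'m"
  assumes H: "Htype B" and z: "z \<noteq> 0"
  shows "(\<Sum>j\<in>UNIV. (Jmap B z x $ j)^2) = norm z ^ 2 * norm x ^ 2"
    and "(\<Sum>j\<in>UNIV. x $ j * Jmap B z x $ j) = 0"
    and "(\<Sum>j\<in>UNIV. norm (B x (axis j 1)) ^ 2) = real CARD('m) * norm x ^ 2"
proof -
  have bl: "bilinear B" and Byy: "\<And>y. B y y = 0" and Jn: "\<And>x Z. norm Z = 1 \<Longrightarrow> norm (Jmap B Z x) = norm x"
    using Htype_facts[OF H] by auto
  have nz: "norm z > 0" using z by simp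
  have "Jmap B z x = norm z *\<^sub>R Jmap B (z /\<^sub>R norm z) x"
    using nz by (simp add: Jmap_scale[symmetric])
  then have "norm (Jmap B z x) = norm z * norm x"
    using Jn[of "z /\<^sub>R norm z" x] nz by simp
  then show "(\<Sum>j\<in>UNIV. (Jmap B z x $ j)^2) = norm z ^ 2 * norm x ^ 2"
    by (simp add: norm_sq_vec[symmetric] power_mult_distrib)
  have lin: "linear (B x)" using bl by (simp add: bilinear_def)
  have "(\<Sum>j\<in>UNIV. x $ j * Jmap B z x $ j) = (\<Sum>j\<in>UNIV. z \<bullet> (x $ j *\<^sub>R B x (axis j 1)))"
    by (simp add: Jmap_def)
  also have "\<dots> = z \<bullet> (\<Sum>j\<in>UNIV. B x (x $ j *\<^sub>R axis j 1))"
    by (simp add: inner_sum_right linear_scale[OF lin])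
  also have "\<dots> = z \<bullet> B x x"
    by (simp add: linear_sum[OF lin, symmetric] vec_expand)
  also have "\<dots> = 0" by (simp add: Byy)
  finally show "(\<Sum>j\<in>UNIV. x $ j * Jmap B z x $ j) = 0" .
  have "(\<Sum>j\<in>UNIV. norm (B x (axis j 1)) ^ 2) = (\<Sum>j\<in>UNIV. \<Sum>k\<in>UNIV. (Jmap B (axis k 1) x $ j)^2)"
    by (simp add: norm_sq_vec Jmap_def inner_axis')
  also have "\<dots> = (\<Sum>k\<in>UNIV. \<Sum>j\<in>UNIV. (Jmap B (axis k 1) x $ j)^2)" by (rule sum.swap)
  also have "\<dots> = (\<Sum>k\<in>(UNIV::'m set). norm x ^ 2)"
    by (simp add: norm_sq_vec[symmetric] Jn)
  finally show "(\<Sum>j\<in>UNIV. norm (B x (axis j 1)) ^ 2) = real CARD('m) * norm x ^ 2" by simp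
qed


theorem lemma3p3:
  fixes B :: "real^'v \<Rightarrow> real^'v \<Rightarrow> real^'m" and n :: nat and C :: real
    and x :: "real^'v" and z :: "real^'m" and i1 :: 'm
  assumes "Htype B" and "CARD('v) = 2 * n" and "C > 0" and "z \<noteq> 0"
  shows "let p = (\<lambda>g. heat_kernel n 1 (fst g) (snd g) :: real);
             R = norm x ^ 2 / 4; m = real CARD('m);
             q = (\<lambda>k1 k2. pk n i1 1 k1 k2 x z)
         in - (C/4) * gradsq B p (x, z) / (p (x, z))^2 + (C/2) * subLap B p (x, z) / p (x, z) + ln (p (x, z))
            = - (R*C/4) * ((q 1 0)^2 + (q 0 1)^2) / (q 0 0)^2
              + (C/2) * (R * q 2 0 + R * q 0 2 + real n * q 1 0 + R * (m - 1) / norm z * q 0 1) / q 0 0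
              + ln (q 0 0)"
proof -
  note H = assms(1) and z = assms(4)
  have bl: "bilinear B" and Byy: "\<And>y. B y y = 0" using Htype_facts[OF H] by auto
  have n1: "n \<ge> 1" using assms(2) by (metis One_nat_def Suc_leI mult_is_0 neq0_conv zero_less_card_finite)
  define R where "R = norm x ^ 2 / 4"
  define S where "S = norm z"
  have S0: "S > 0" using z by (simp add: S_def)
  have Rg: "R > -1/2" by (simp add: R_def) (smt (verit) zero_le_power2)
  define p where "p = (\<lambda>g::((real^'v) \<times> (real^'m)). heat_kernel n 1 (fst g) (snd g) :: real)"
  define a where "a j = x $ j" for j
  define b where "b j = Jmap B z x $ j" for j
  define hr0 where "hr0 = hr n i1 R S"
  define hs0 where "hs0 = hs n i1 R S"
  define hrr0 where "hrr0 = hrr n i1 R S"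
  define hss0 where "hss0 = hss n i1 R S"
  define Mx0 where "Mx0 = Mx n i1 R S"
  have zw: "z \<bullet> ((1/2) *\<^sub>R B x (axis j 1)) = b j / 2" for j by (simp add: b_def Jmap_def)
  have zb: "z \<bullet> B x (axis j 1) = b j" for j by (simp add: b_def Jmap_def)
  have ww: "((1/2) *\<^sub>R B x (axis j 1)) \<bullet> ((1/2) *\<^sub>R B x (axis j 1)) = norm (B x (axis j 1)) ^ 2 / 4" for j
    by (simp add: power2_norm_eq_inner)
  have X1: "Xfield B j p (x, z) = a j / 2 * hr0 + (b j / 2) / S * hs0" for j
    unfolding p_def Xfield_eqs(1)[OF H, where ia=i1 and n=n and j=j and x=x and z=z]
    by (subst F_derivs(1)[OF n1 z]) (simp add: zw zb inner_axis a_def S_def R_def hr0_def hs0_def)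
  have X2: "Xfield B j (Xfield B j p) (x, z) = 1/2 * hr0 + (a j / 2)^2 * hrr0
       + ((norm (B x (axis j 1)) ^ 2 / 4) / S - (b j / 2)^2 / S ^ 3) * hs0
       + ((b j / 2) / S)^2 * hss0 + a j / 2 * ((b j / 2) / S) * Mx0" for j
    unfolding p_def Xfield_eqs(2)[OF H, where ia=i1 and n=n and j=j and x=x and z=z]
    by (subst F_derivs(2)[OF n1 z]) (simp add: zw zb ww power2_norm_eq_inner inner_axis a_def S_def R_def hr0_def hs0_def hrr0_def hss0_def Mx0_def)
  note sf = sums_facts[OF H z, folded a_def b_def]
  have sa: "(\<Sum>j\<in>UNIV. (a j)^2) = 4 * R" by (simp add: a_def R_def norm_sq_vec)
  have sb: "(\<Sum>j\<in>UNIV. (b j)^2) = S^2 * (4 * R)" using sf(1) by (simp add: b_def S_def R_def)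
  have sab: "(\<Sum>j\<in>UNIV. a j * b j) = 0" using sf(2) by (simp add: a_def b_def)
  have sB: "(\<Sum>j\<in>UNIV. norm (B x (axis j 1)) ^ 2) = real CARD('m) * (4 * R)" using sf(3) by (simp add: R_def)
  have G: "gradsq B p (x, z) = R * (hr0^2 + hs0^2)"
  proof -
    have "(a j / 2 * hr0 + (b j / 2) / S * hs0)^2
          = hr0^2 / 4 * (a j)^2 + hr0 * hs0 / (2 * S) * (a j * b j) + hs0^2 / (4 * S^2) * (b j)^2" for j
      using S0 by (simp add: power2_eq_square field_simps)
    then have "gradsq B p (x, z) = hr0^2 / 4 * (\<Sum>j\<in>UNIV. (a j)^2) + hr0 * hs0 / (2 * S) * (\<Sum>j\<in>UNIV. a j * b j)
           + hs0^2 / (4 * S^2) * (\<Sum>j\<in>UNIV. (b j)^2)"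
      by (simp add: gradsq_def X1 sum.distrib sum_distrib_left)
    also have "\<dots> = R * (hr0^2 + hs0^2)" unfolding sa sb sab using S0 by (simp add: field_simps power2_eq_square)
    finally show ?thesis .
  qed
  have L: "subLap B p (x, z) = real n * hr0 + R * hrr0 + R * (real CARD('m) - 1) / S * hs0 + R * hss0"
  proof -
    have X2': "Xfield B j (Xfield B j p) (x, z) = 1/2 * hr0 + hrr0 / 4 * (a j)^2
          + hs0 / (4 * S) * (norm (B x (axis j 1)) ^ 2) - hs0 / (4 * S^3) * (b j)^2
          + hss0 / (4 * S^2) * (b j)^2 + Mx0 / (4 * S) * (a j * b j)" for j
      unfolding X2 using S0 by (simp add: power_divide field_simps)
    have "subLap B p (x, z) = real CARD('v) * (1/2 * hr0) + hrr0 / 4 * (\<Sum>j\<in>UNIV. (a j)^2)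
          + hs0 / (4 * S) * (\<Sum>j\<in>UNIV. norm (B x (axis j 1)) ^ 2) - hs0 / (4 * S^3) * (\<Sum>j\<in>UNIV. (b j)^2)
          + hss0 / (4 * S^2) * (\<Sum>j\<in>UNIV. (b j)^2) + Mx0 / (4 * S) * (\<Sum>j\<in>UNIV. a j * b j)"
      unfolding subLap_def X2' sum.distrib sum_subtractf sum_distrib_left[symmetric] by simp
    also have "\<dots> = real n * hr0 + R * hrr0 + R * (real CARD('m) - 1) / S * hs0 + R * hss0"
      unfolding sa sb sab sB using S0 assms(2) by (simp add: field_simps power2_eq_square power3_eq_cube)
    finally show ?thesis .
  qed
  have P: "p (x, z) = hfun n i1 R S" by (simp add: p_def heat_hfun[of _ _ _ i1] R_def S_def)
  have q: "pk n i1 1 k1 k2 x z = hder n i1 k1 k2 R S" for k1 k2 by (simp add: pk_def R_def S_def)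
  note hv = hder_vals[OF n1 Rg, of i1 S]
  show ?thesis
    unfolding Let_def p_def[symmetric] R_def[symmetric] q hv G L P
    by (simp add: S_def[symmetric] hr0_def hs0_def hrr0_def hss0_def field_simps)
qed

end
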